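(* Let $h\in\mathcal H$ and $\varphi(\underline{x})=h(x_0,x_1)$ on $X=[0,1]^{\mathbb N_0}$. Let $a,b\in\mathrm{m}_h$ be such that $a$ and $b$ do not belong to the same connected component of $\mathrm{m}_h$. Then $H_\varphi(a^\infty,b^\infty)+H_\varphi(b^\infty,a^\infty)\neq0$, i.e. $a^\infty\not\sim_\varphi b^\infty$.
   Context: $X=[0,1]^{\mathbb N_0}$ with metric $d_X(\underline{x},\underline{y})=\sum_{i\ge0}|x_i-y_i|/2^{i+1}$ and shift $\sigma(\underline{x})_i=x_{i+1}$. $\alpha_\varphi=\inf_\mu\int\varphi\,d\mu$ over $\sigma$-invariant Borel probability measures. $B(\underline{x},\underline{y},n;\varepsilon)=\{\underline{z}: d_X(\underline{x},\underline{z})<\varepsilon,\ d_X(\sigma^n\underline{z},\underline{y})<\varepsilon\}$; Peierls barrier $H_\varphi(\underline{x},\underline{y})=\lim_{\varepsilon\to0}\liminf_{n\to\infty}\inf\{\sum_{i=0}^{n-1}(\varphi(\sigma^i\underline{z})-\alpha_\varphi): \underline{z}\in B(\underline{x},\underline{y},n;\varepsilon)\}\in\mathbb R\cup\{+\infty\}$. For points of the Aubry set, $\underline{x}\sim_\varphi\underline{y}$ means $H_\varphi(\underline{x},\underline{y})+H_\varphi(\underline{y},\underline{x})=0$. $h^*=\min_x h(x,x)$, $\mathrm{m}_h=\{a: h(a,a)=h^*\}$, $a^\infty=aaa\ldots$. A finite sequence $(x_k,\dots,x_l)$ is minimal (for $h$) if $\sum_{i=k}^{l-1}h(x_i,x_{i+1})\le\sum_{i=k}^{l-1}h(y_i,y_{i+1})$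 for every $(y_k,\dots,y_l)$ in $[0,1]$ with the same endpoints. $\mathcal H$ is the set of Lipschitz $h:[0,1]^2\to\mathbb R$ such that (H3) if $\xi_1<\xi_2$, $\eta_1<\eta_2$ then $h(\xi_1,\eta_1)+h(\xi_2,\eta_2)<h(\xi_1,\eta_2)+h(\xi_2,\eta_1)$; and (H4) if $(x_{-1},x_0,x_1)\ne(x'_{-1},x_0,x'_1)$ are both minimal then $(x_{-1}-x'_{-1})(x_1-x'_1)<0$. *)

theory Defs
  imports "HOL-Probability.Probability"
begin

definition Xsp :: "(nat \<Rightarrow> real) set" where
  "Xsp = {x. \<forall>i. x i \<in> {0..1}}"

definition dX :: "(nat \<Rightarrow> real) \<Rightarrow> (nat \<Rightarrow> real) \<Rightarrow> real" where
  "dX x y = (\<Sum>i. \<bar>x i - y i\<bar> / 2 ^ (Suc i))"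

definition shift :: "(nat \<Rightarrow> real) \<Rightarrow> (nat \<Rightarrow> real)" where
  "shift x = (\<lambda>i. x (Suc i))"

text \<open>Borel probability measures on X (Borel sets of the product topology restricted to X,
  which is the topology induced by dX on X) that are shift-invariant.\<close>
definition inv_measures :: "(nat \<Rightarrow> real) measure set" where
  "inv_measures = {\<mu>. prob_space \<mu> \<and> sets \<mu> = sets (restrict_space borel Xsp) \<and>
      shift \<in> measurable \<mu> \<mu> \<and>
      (\<forall>A\<in>sets \<mu>. emeasure \<mu> (shift -` A \<inter> space \<mu>) = emeasure \<mu> A)}"

definition alpha :: "((nat \<Rightarrow> real) \<Rightarrow> real) \<Rightarrow> real" where
  "alpha \<phi> = (INF \<mu>\<in>inv_measures. integral\<^sup>L \<mu> \<phi>)"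

definition Bset :: "(nat \<Rightarrow> real) \<Rightarrow> (nat \<Rightarrow> real) \<Rightarrow> nat \<Rightarrow> real \<Rightarrow> (nat \<Rightarrow> real) set" where
  "Bset x y n \<epsilon> = {z \<in> Xsp. dX x z < \<epsilon> \<and> dX ((shift ^^ n) z) y < \<epsilon>}"

text \<open>Peierls barrier, with values in the extended reals (inf of the empty set is +infinity).\<close>
definition peierls :: "((nat \<Rightarrow> real) \<Rightarrow> real) \<Rightarrow> (nat \<Rightarrow> real) \<Rightarrow> (nat \<Rightarrow> real) \<Rightarrow> ereal" where
  "peierls \<phi> x y = Lim (at_right (0::real)) (\<lambda>\<epsilon>.
      liminf (\<lambda>n. INF z\<in>Bset x y n \<epsilon>.
         ereal (\<Sum>i<n. \<phi> ((shift ^^ i) z) - alpha \<phi>)))"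

definition hstar :: "(real \<Rightarrow> real \<Rightarrow> real) \<Rightarrow> real" where
  "hstar h = Inf ((\<lambda>x. h x x) ` {0..1})"

definition mset_h :: "(real \<Rightarrow> real \<Rightarrow> real) \<Rightarrow> real set" where
  "mset_h h = {a \<in> {0..1}. h a a = hstar h}"

definition minimal_seq :: "(real \<Rightarrow> real \<Rightarrow> real) \<Rightarrow> real list \<Rightarrow> bool" where
  "minimal_seq h xs \<longleftrightarrow> xs \<noteq> [] \<and> set xs \<subseteq> {0..1} \<and>
     (\<forall>ys. length ys = length xs \<and> set ys \<subseteq> {0..1} \<and> hd ys = hd xs \<and> last ys = last xs \<longrightarrow>
        (\<Sum>i<length xs - 1. h (xs ! i) (xs ! Suc i)) \<le> (\<Sum>i<length ys - 1. h (ys ! i) (ys ! Suc i)))"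

definition classH :: "(real \<Rightarrow> real \<Rightarrow> real) set" where
  "classH = {h.
     (\<exists>L. L-lipschitz_on ({0..1} \<times> {0..1}) (\<lambda>(x, y). h x y)) \<and>
     (\<forall>\<xi>1\<in>{0..1}. \<forall>\<xi>2\<in>{0..1}. \<forall>\<eta>1\<in>{0..1}. \<forall>\<eta>2\<in>{0..1}.
        \<xi>1 < \<xi>2 \<and> \<eta>1 < \<eta>2 \<longrightarrow> h \<xi>1 \<eta>1 + h \<xi>2 \<eta>2 < h \<xi>1 \<eta>2 + h \<xi>2 \<eta>1) \<and>
     (\<forall>u w u' w' v. (u, w) \<noteq> (u', w') \<and> minimal_seq h [u, v, w] \<and> minimal_seq h [u', v, w']
        \<longrightarrow> (u - u') * (w - w') < 0)}"

end

theory Submission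
  imports Defs
begin

fun pth :: "(real \<Rightarrow> real \<Rightarrow> real) \<Rightarrow> real list \<Rightarrow> real" where
  "pth h [] = 0" | "pth h [x] = 0" | "pth h (x # y # r) = h x y + pth h (y # r)"

definition cyc :: "(real \<Rightarrow> real \<Rightarrow> real) \<Rightarrow> real list \<Rightarrow> real" where
  "cyc h xs = pth h xs + h (last xs) (hd xs)"

lemma pth_append: "A \<noteq> [] \<Longrightarrow> B \<noteq> [] \<Longrightarrow> pth h (A @ B) = pth h A + h (last A) (hd B) + pth h B"
proof (induction A)
  case Nil then show ?case by simp
next
  case (Cons x A)
  show ?case
  proof (cases A)
    case Nil then show ?thesis using Cons by (cases B) auto
  next
    case (Cons y r) then show ?thesis using Cons.IH Cons.prems by simp
  qed
qed

lemma cyc_swap: "A \<noteq> [] \<Longrightarrow> B \<noteq> [] \<Longrightarrow> cyc h (A @ B) = cyc h (B @ A)"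
  unfolding cyc_def by (simp add: pth_append)

lemma cyc_rot: "cyc h (us @ m # vs) = cyc h ((vs @ us) @ [m])"
proof (cases "vs @ us = []")
  case True then show ?thesis by simp
next
  case False
  show ?thesis
  proof (cases "us = []")
    case True
    then show ?thesis using False cyc_swap[of "[m]" vs h] by simp
  next
    case F2: False
    have "cyc h (us @ m # vs) = cyc h ((m # vs) @ us)" using cyc_swap[of us "m#vs" h] F2 by simp
    also have "\<dots> = cyc h ([m] @ (vs @ us))" by simp
    also have "\<dots> = cyc h ((vs @ us) @ [m])" using cyc_swap[of "[m]" "vs@us" h] False by simp
    finally show ?thesis .
  qed
qed

lemma cyc_snoc: "zs \<noteq> [] \<Longrightarrow> cyc h (zs @ [m]) = cyc h zs - h (last zs) (hd zs) + h (last zs) m + h m (hd zs)"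
  unfolding cyc_def by (simp add: pth_append)

lemma cyc_ge:
  assumes mon: "\<And>p s m. p \<in> {0..1} \<Longrightarrow> s \<in> {0..1} \<Longrightarrow> m \<in> {0..1} \<Longrightarrow> p \<le> m \<Longrightarrow> s \<le> m \<Longrightarrow>
      h p s + h m m \<le> h p m + h m s"
    and hs: "\<And>x. x \<in> {0..1} \<Longrightarrow> hs \<le> h x x"
  shows "xs \<noteq> [] \<Longrightarrow> set xs \<subseteq> {0..1} \<Longrightarrow> real (length xs) * hs \<le> cyc h xs"
proof (induction "length xs" arbitrary: xs rule: less_induct)
  case less
  show ?case
  proof (cases "length xs = 1")
    case True
    then obtain x where "xs = [x]" by (metis One_nat_def length_0_conv length_Suc_conv)
    then show ?thesis using hs less.prems by (simp add: cyc_def)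
  next
    case False
    define m where "m = Max (set xs)"
    have mi: "m \<in> set xs" using less.prems m_def by simp
    then obtain us vs where xs: "xs = us @ m # vs" by (meson split_list)
    define zs where "zs = vs @ us"
    have zne: "zs \<noteq> []" using False xs zs_def by auto
    have lz: "length xs = Suc (length zs)" using xs zs_def by simp
    have zs1: "set zs \<subseteq> {0..1}" using less.prems xs zs_def by auto
    have IH: "real (length zs) * hs \<le> cyc h zs" using less.hyps[of zs] lz zne zs1 by simp
    have zm: "\<And>x. x \<in> set zs \<Longrightarrow> x \<le> m"
    proof -
      fix x assume "x \<in> set zs" hence "x \<in> set xs" using xs zs_def by auto
      thus "x \<le> m" unfolding m_def by simp
    qed
    have "last zs \<in> set zs" "hd zs \<in> set zs" using zne by auto
    hence M: "h (last zs) (hd zs) + h m m \<le> h (last zs) m + h m (hd zs)"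
      using mon zm zs1 mi less.prems by blast
    have "cyc h xs = cyc h (zs @ [m])" unfolding xs zs_def by (rule cyc_rot)
    also have "\<dots> = cyc h zs - h (last zs) (hd zs) + h (last zs) m + h m (hd zs)" using cyc_snoc zne by simp
    finally have "cyc h xs \<ge> cyc h zs + h m m" using M by simp
    moreover have "hs \<le> h m m" using hs mi less.prems by auto
    ultimately show ?thesis using IH lz by (simp add: algebra_simps)
  qed
qed

lemma cyc_gt:
  assumes mon: "\<And>p s m. p \<in> {0..1} \<Longrightarrow> s \<in> {0..1} \<Longrightarrow> m \<in> {0..1} \<Longrightarrow> p \<le> m \<Longrightarrow> s \<le> m \<Longrightarrow>
      h p s + h m m \<le> h p m + h m s"
    and hs: "\<And>x. x \<in> {0..1} \<Longrightarrow> hs \<le> h x x"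
    and K: "\<And>p s m. p \<in> {0..c} \<Longrightarrow> s \<in> {0..c} \<Longrightarrow> m \<in> {c..1} \<Longrightarrow> E \<le> h p m + h m s - h p s - hs"
  shows "set xs \<subseteq> {0..1} \<Longrightarrow> \<exists>x\<in>set xs. x < c \<Longrightarrow> \<exists>x\<in>set xs. c \<le> x \<Longrightarrow>
    real (length xs) * hs + E \<le> cyc h xs"
proof (induction "length xs" arbitrary: xs rule: less_induct)
  case less
  define m where "m = Max (set xs)"
  have xne: "xs \<noteq> []" using less.prems by auto
  have mi: "m \<in> set xs" using xne m_def by simp
  have cm: "c \<le> m" using less.prems(3) m_def by (meson List.finite_set Max_ge order.trans)
  then obtain us vs where xs: "xs = us @ m # vs" using mi by (meson split_list)
  define zs where "zs = vs @ us"
  obtain y where y: "y \<in> set xs" "y < c" using less.prems by auto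
  have yz: "y \<in> set zs" using y xs zs_def cm by auto
  have zne: "zs \<noteq> []" using yz by auto
  have lz: "length xs = Suc (length zs)" using xs zs_def by simp
  have zs1: "set zs \<subseteq> {0..1}" using less.prems xs zs_def by auto
  have zm: "\<And>x. x \<in> set zs \<Longrightarrow> x \<le> m"
    proof -
      fix x assume "x \<in> set zs" hence "x \<in> set xs" using xs zs_def by auto
      thus "x \<le> m" unfolding m_def by simp
    qed
  have lh: "last zs \<in> set zs" "hd zs \<in> set zs" using zne by auto
  have m1: "m \<in> {0..1}" using mi less.prems by auto
  have "cyc h xs = cyc h (zs @ [m])" unfolding xs zs_def by (rule cyc_rot)
  then have eq: "cyc h xs = cyc h zs - h (last zs) (hd zs) + h (last zs) m + h m (hd zs)"
    using cyc_snoc zne by simp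
  have hm: "hs \<le> h m m" using hs m1 by auto
  show ?case
  proof (cases "\<exists>x\<in>set zs. c \<le> x")
    case True
    have IH: "real (length zs) * hs + E \<le> cyc h zs" using less.hyps[of zs] lz zs1 True yz y by auto
    have M: "h (last zs) (hd zs) + h m m \<le> h (last zs) m + h m (hd zs)"
      using mon zm zs1 lh m1 by blast
    show ?thesis using IH lz eq M hm by (simp add: algebra_simps)
  next
    case False
    have G: "real (length zs) * hs \<le> cyc h zs" using cyc_ge[where h=h and hs=hs and xs=zs, OF mon hs] zne zs1 by auto
    have "last zs \<in> {0..c}" "hd zs \<in> {0..c}" using False lh zs1 by force+
    hence "E \<le> h (last zs) m + h m (hd zs) - h (last zs) (hd zs) - hs" using K m1 cm by auto
    then show ?thesis using G lz eq by (simp add: algebra_simps)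
  qed
qed

lemma classH_monge:
  assumes "h \<in> classH" "p \<in> {0..1}" "s \<in> {0..1}" "m \<in> {0..1}" "p \<le> m" "s \<le> m"
  shows "h p s + h m m \<le> h p m + h m s"
proof -
  have H3: "\<And>x1 x2 y1 y2. x1\<in>{0..1} \<Longrightarrow> x2\<in>{0..1} \<Longrightarrow> y1\<in>{0..1} \<Longrightarrow> y2\<in>{0..1} \<Longrightarrow>
      x1 < x2 \<Longrightarrow> y1 < y2 \<Longrightarrow> h x1 y1 + h x2 y2 < h x1 y2 + h x2 y1"
    using assms(1) unfolding classH_def by blast
  show ?thesis
  proof (cases "p < m \<and> s < m")
    case True then show ?thesis using H3[of p m s m] assms by auto
  next
    case False then have "p = m \<or> s = m" using assms by auto
    then show ?thesis by auto
  qed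
qed

lemma classH_monge_strict:
  assumes "h \<in> classH" "p \<in> {0..1}" "s \<in> {0..1}" "m \<in> {0..1}" "p < m" "s < m"
  shows "h p s + h m m < h p m + h m s"
  using assms unfolding classH_def by auto

lemma classH_lip:
  assumes "h \<in> classH"
  obtains L where "0 \<le> L" "\<And>p q q'. p \<in> {0..1} \<Longrightarrow> q \<in> {0..1} \<Longrightarrow> q' \<in> {0..1} \<Longrightarrow>
     \<bar>h p q - h p q'\<bar> \<le> L * \<bar>q - q'\<bar>"
    and "continuous_on ({0..1} \<times> {0..1}) (\<lambda>(x, y). h x y)"
proof -
  obtain L where L: "L-lipschitz_on ({0..1} \<times> {0..1}) (\<lambda>(x, y). h x y)"
    using assms unfolding classH_def by blast
  have "0 \<le> L" using L lipschitz_on_nonneg by blast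
  moreover have "\<bar>h p q - h p q'\<bar> \<le> L * \<bar>q - q'\<bar>" if "p \<in> {0..1}" "q \<in> {0..1}" "q' \<in> {0..1}" for p q q'
  proof -
    have "dist ((\<lambda>(x, y). h x y) (p, q)) ((\<lambda>(x, y). h x y) (p, q')) \<le> L * dist (p, q) (p, q')"
      using lipschitz_onD[OF L] that by blast
    then show ?thesis by (simp add: dist_Pair_Pair dist_real_def)
  qed
  moreover have "continuous_on ({0..1} \<times> {0..1}) (\<lambda>(x, y). h x y)"
    using L lipschitz_on_continuous_on by blast
  ultimately show ?thesis using that by blast
qed

lemma exists_E:
  assumes hH: "h \<in> classH" and c: "c \<in> {0..1}" and hc: "hs < h c c"
    and hs: "\<And>x. x \<in> {0..1} \<Longrightarrow> hs \<le> h x x"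
  shows "\<exists>E>0. \<forall>p s m. p \<in> {0..c} \<longrightarrow> s \<in> {0..c} \<longrightarrow> m \<in> {c..1} \<longrightarrow> E \<le> h p m + h m s - h p s - hs"
proof -
  obtain L where cont: "continuous_on ({0..1} \<times> {0..1}) (\<lambda>(x, y). h x y)"
    using classH_lip[OF hH] by blast
  define D where "D = {0..c} \<times> {0..c} \<times> {c..1::real}"
  define H where "H = (\<lambda>(x, y). h x y)"
  define f where "f = (\<lambda>t::real \<times> real \<times> real. H (fst t, snd (snd t)) + H (snd (snd t), fst (snd t))
       - H (fst t, fst (snd t)) - hs)"
  have DS: "\<And>t. t \<in> D \<Longrightarrow> fst t \<in> {0..1} \<and> fst (snd t) \<in> {0..1} \<and> snd (snd t) \<in> {0..1}"
    using c unfolding D_def by auto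
  have c1: "continuous_on D (\<lambda>t. H (fst t, snd (snd t)))"
    by (rule continuous_on_compose2[OF cont[folded H_def]]) (auto intro!: continuous_intros dest: DS)
  have c2: "continuous_on D (\<lambda>t. H (snd (snd t), fst (snd t)))"
    by (rule continuous_on_compose2[OF cont[folded H_def]]) (auto intro!: continuous_intros dest: DS)
  have c3: "continuous_on D (\<lambda>t. H (fst t, fst (snd t)))"
    by (rule continuous_on_compose2[OF cont[folded H_def]]) (auto intro!: continuous_intros dest: DS)
  have cf: "continuous_on D f" unfolding f_def by (intro continuous_intros c1 c2 c3)
  have "compact D" unfolding D_def by (intro compact_Times compact_Icc)
  moreover have "D \<noteq> {}" using c unfolding D_def by auto
  ultimately obtain t0 where t0: "t0 \<in> D" "\<And>t. t \<in> D \<Longrightarrow> f t0 \<le> f t"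
    using continuous_attains_inf[OF _ _ cf] by blast
  obtain p0 s0 m0 where t0e: "t0 = (p0, s0, m0)" by (cases t0) auto
  have r: "p0 \<in> {0..c}" "s0 \<in> {0..c}" "m0 \<in> {c..1}" using t0 t0e D_def by auto
  have f0: "f t0 = h p0 m0 + h m0 s0 - h p0 s0 - hs" unfolding f_def H_def t0e by simp
  have "f t0 > 0"
  proof (cases "m0 = c")
    case True
    have "h p0 s0 + h m0 m0 \<le> h p0 m0 + h m0 s0"
      using classH_monge[OF hH, of p0 s0 m0] r c by auto
    then show ?thesis using f0 hc True by simp
  next
    case False
    then have "c < m0" using r by auto
    then have "h p0 s0 + h m0 m0 < h p0 m0 + h m0 s0"
      using classH_monge_strict[OF hH, of p0 s0 m0] r c by auto
    moreover have "hs \<le> h m0 m0" using hs r c by auto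
    ultimately show ?thesis using f0 by simp
  qed
  moreover have "\<forall>p s m. p \<in> {0..c} \<longrightarrow> s \<in> {0..c} \<longrightarrow> m \<in> {c..1} \<longrightarrow> f t0 \<le> h p m + h m s - h p s - hs"
  proof (intro allI impI)
    fix p s m assume "p \<in> {0..c}" "s \<in> {0..c}" "m \<in> {c..1}"
    then have "(p, s, m) \<in> D" unfolding D_def by auto
    then show "f t0 \<le> h p m + h m s - h p s - hs" using t0(2) unfolding f_def H_def by fastforce
  qed
  ultimately show ?thesis by blast
qed

lemma phi_cont:
  assumes cont: "continuous_on ({0..1} \<times> {0..1}) (\<lambda>(x, y). h x y)"
  shows "continuous_on Xsp (\<lambda>x. h (x 0) (x 1))"
proof -
  have "continuous_on Xsp (\<lambda>x::nat\<Rightarrow>real. (x 0, x 1))"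
    by (intro continuous_on_Pair) (auto intro: continuous_on_subset[OF continuous_on_product_coordinates])
  moreover have "(\<lambda>x::nat\<Rightarrow>real. (x 0, x 1)) ` Xsp \<subseteq> {0..1} \<times> {0..1}" unfolding Xsp_def by auto
  ultimately have "continuous_on Xsp ((\<lambda>(x, y). h x y) \<circ> (\<lambda>x::nat\<Rightarrow>real. (x 0, x 1)))"
    using continuous_on_compose continuous_on_subset[OF cont] by blast
  then show ?thesis by (simp add: o_def)
qed

lemma alpha_le:
  assumes cont: "continuous_on ({0..1} \<times> {0..1}) (\<lambda>(x, y). h x y)" and a: "a \<in> {0..1}"
  shows "alpha (\<lambda>x. h (x 0) (x 1)) \<le> h a a"
proof -
  define \<phi> where "\<phi> = (\<lambda>x::nat\<Rightarrow>real. h (x 0) (x 1))"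
  define M where "M = restrict_space (borel :: (nat \<Rightarrow> real) measure) Xsp"
  have spM: "space M = Xsp" unfolding M_def by (simp add: space_restrict_space)
  have cphi: "continuous_on Xsp \<phi>" using phi_cont[OF cont] \<phi>_def by simp
  have mphi: "\<phi> \<in> borel_measurable M" unfolding M_def by (rule borel_measurable_continuous_on_restrict[OF cphi])
  have "compact ((\<lambda>(x, y). h x y) ` ({0..1} \<times> {0..1::real}))"
    by (intro compact_continuous_image cont compact_Times compact_Icc)
  then obtain B where B: "\<And>t. t \<in> (\<lambda>(x, y). h x y) ` ({0..1} \<times> {0..1::real}) \<Longrightarrow> norm t \<le> B"
    using compact_imp_bounded bounded_iff by metis
  have Bphi: "\<And>x. x \<in> Xsp \<Longrightarrow> norm (\<phi> x) \<le> B"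
    using B unfolding \<phi>_def Xsp_def by force
  have lb: "- B \<le> integral\<^sup>L \<mu> \<phi>" if "\<mu> \<in> inv_measures" for \<mu>
  proof -
    have ps: "prob_space \<mu>" and sm: "sets \<mu> = sets M" using that unfolding inv_measures_def M_def by auto
    interpret prob_space \<mu> by (rule ps)
    have sp: "space \<mu> = Xsp" using sets_eq_imp_space_eq[OF sm] spM by simp
    have m2: "\<phi> \<in> borel_measurable \<mu>" using mphi measurable_cong_sets[OF sm refl] by blast
    have ae: "AE x in \<mu>. norm (\<phi> x) \<le> B" using Bphi sp by (intro AE_I2) auto
    have int: "integrable \<mu> \<phi>" by (rule integrable_const_bound[OF ae m2])
    show ?thesis by (rule integral_ge_const[OF int]) (use ae in \<open>auto elim: AE_mp\<close>)
  qed
  define \<mu>0 where "\<mu>0 = return M (\<lambda>_. a)"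
  have aX: "(\<lambda>_. a) \<in> Xsp" using a unfolding Xsp_def by auto
  have shX: "shift \<in> Xsp \<rightarrow> Xsp" unfolding Xsp_def shift_def by auto
  have shc: "continuous_on UNIV shift" unfolding shift_def
    by (intro continuous_on_coordinatewise_then_product) simp
  have shm: "shift \<in> measurable M M" unfolding M_def
    by (rule measurable_restrict_space3[OF borel_measurable_continuous_onI[OF shc] shX])
  have "\<mu>0 \<in> inv_measures"
    unfolding inv_measures_def
  proof (intro CollectI conjI ballI)
    show "prob_space \<mu>0" unfolding \<mu>0_def using aX spM by (intro prob_space_return) simp
    show "sets \<mu>0 = sets (restrict_space borel Xsp)" unfolding \<mu>0_def M_def by simp
    show "shift \<in> measurable \<mu>0 \<mu>0" unfolding \<mu>0_def using shm by simp
    fix A assume "A \<in> sets \<mu>0"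
    then have A: "A \<in> sets M" unfolding \<mu>0_def by simp
    have "shift -` A \<inter> space \<mu>0 \<in> sets M" unfolding \<mu>0_def using shm A by (simp add: measurable_sets)
    then have "emeasure \<mu>0 (shift -` A \<inter> space \<mu>0) = indicator (shift -` A \<inter> space \<mu>0) (\<lambda>_. a)"
      unfolding \<mu>0_def by simp
    also have "\<dots> = indicator A (\<lambda>_. a)" using aX spM unfolding \<mu>0_def shift_def
      by (simp add: indicator_def)
    also have "\<dots> = emeasure \<mu>0 A" unfolding \<mu>0_def using A by simp
    finally show "emeasure \<mu>0 (shift -` A \<inter> space \<mu>0) = emeasure \<mu>0 A" .
  qed
  moreover have "integral\<^sup>L \<mu>0 \<phi> = h a a" unfolding \<mu>0_def
    using integral_return[of "\<lambda>_. a" M \<phi>] aX spM mphi \<phi>_def by simp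
  moreover have "bdd_below ((\<lambda>\<mu>. integral\<^sup>L \<mu> \<phi>) ` inv_measures)"
    using lb by (intro bdd_belowI[where m="-B"]) auto
  ultimately show ?thesis unfolding alpha_def \<phi>_def[symmetric]
    by (metis cINF_lower)
qed

lemma shift_pow: "(shift ^^ n) z = (\<lambda>i. z (i + n))"
  by (induction n arbitrary: z) (auto simp: shift_def funpow_Suc_right)

lemma shift_pow_X: "z \<in> Xsp \<Longrightarrow> (shift ^^ n) z \<in> Xsp"
  unfolding shift_pow Xsp_def by auto

lemma dX_0:
  assumes "x \<in> Xsp" "y \<in> Xsp"
  shows "\<bar>x 0 - y 0\<bar> \<le> 2 * dX x y"
proof -
  define f where "f = (\<lambda>i. \<bar>x i - y i\<bar> / 2 ^ (Suc i))"
  have b: "\<bar>x i - y i\<bar> \<le> 1" for i using assms unfolding Xsp_def by (auto simp: abs_le_iff) (smt (verit) atLeastAtMost_iff)+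
  have "norm (f i) \<le> (1/2) ^ i" for i
  proof -
    have "norm (f i) = \<bar>x i - y i\<bar> / 2 ^ (Suc i)" unfolding f_def by simp
    also have "\<dots> \<le> 1 / 2 ^ (Suc i)" using b[of i] by (intro divide_right_mono) auto
    also have "\<dots> \<le> (1/2) ^ i" by (simp add: power_divide field_simps)
    finally show ?thesis .
  qed
  then have s: "summable f" by (intro summable_comparison_test[of f "\<lambda>i. (1/2)^i"]) (auto intro: summable_geometric)
  have "sum f {0} \<le> suminf f" by (rule sum_le_suminf[OF s]) (auto simp: f_def)
  then show ?thesis unfolding dX_def f_def[symmetric] by (simp add: f_def)
qed

lemma peierls_ge:
  assumes "0 < e"
  shows "liminf (\<lambda>n. INF z\<in>Bset x y n e. ereal (\<Sum>i<n. \<phi> ((shift ^^ i) z) - alpha \<phi>)) \<le> peierls \<phi> x y"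
proof -
  define G where "G = (\<lambda>e. liminf (\<lambda>n. INF z\<in>Bset x y n e. ereal (\<Sum>i<n. \<phi> ((shift ^^ i) z) - alpha \<phi>)))"
  have anti: "G e2 \<le> G e1" if "e1 \<le> e2" for e1 e2
    unfolding G_def
  proof (intro Liminf_mono always_eventually allI)
    fix n
    have "Bset x y n e1 \<subseteq> Bset x y n e2" using that unfolding Bset_def by auto
    then show "(INF z\<in>Bset x y n e2. ereal (\<Sum>i<n. \<phi> ((shift ^^ i) z) - alpha \<phi>))
       \<le> (INF z\<in>Bset x y n e1. ereal (\<Sum>i<n. \<phi> ((shift ^^ i) z) - alpha \<phi>))"
      by (rule INF_superset_mono) auto
  qed
  define S where "S = (SUP e\<in>{0<..}. G e)"
  have T: "(G \<longlongrightarrow> S) (at_right 0)"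
  proof (rule order_tendstoI)
    fix y assume "y < S"
    then obtain e0 where e0: "e0 > 0" "y < G e0" unfolding S_def less_SUP_iff by auto
    show "eventually (\<lambda>e. y < G e) (at_right 0)"
      unfolding eventually_at_right[OF e0(1)]
      using e0 anti by (intro exI[of _ e0]) (auto intro: less_le_trans)
  next
    fix y assume Sy: "S < y"
    have "G e' < y" if "e' > 0" for e'
    proof -
      have "G e' \<le> S" unfolding S_def using that by (intro SUP_upper) auto
      then show ?thesis using Sy by simp
    qed
    then show "eventually (\<lambda>e. G e < y) (at_right 0)"
      unfolding eventually_at_right[OF zero_less_one] by (auto intro: exI[of _ 1])
  qed
  have "peierls \<phi> x y = S" unfolding peierls_def G_def[symmetric]
    by (rule tendsto_Lim[OF trivial_limit_at_right_real T])
  moreover have "G e \<le> S" unfolding S_def using assms by (intro SUP_upper) auto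
  ultimately show ?thesis unfolding G_def by simp
qed

lemma inf_add2:
  fixes f g :: "nat \<Rightarrow> (nat \<Rightarrow> real) \<Rightarrow> real"
  assumes H: "\<And>n z m w. z \<in> B n \<Longrightarrow> w \<in> C m \<Longrightarrow> c \<le> f n z + g m w"
  shows "ereal c \<le> (INF n. INF z\<in>B n. ereal (f n z)) + (INF m. INF w\<in>C m. ereal (g m w))"
proof -
  define P where "P = (INF n. INF z\<in>B n. ereal (f n z))"
  define Q where "Q = (INF m. INF w\<in>C m. ereal (g m w))"
  show ?thesis
  proof (cases "\<exists>n. B n \<noteq> {}")
    case False
    then have "P = \<infinity>" unfolding P_def by (simp add: top_ereal_def)
    then show ?thesis unfolding P_def[symmetric] Q_def[symmetric] by simp
  next
    case True
    then obtain n0 z0 where z0: "z0 \<in> B n0" by auto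
    show ?thesis
    proof (cases "\<exists>m. C m \<noteq> {}")
      case False
      then have "Q = \<infinity>" unfolding Q_def by (simp add: top_ereal_def)
      then show ?thesis unfolding P_def[symmetric] Q_def[symmetric] by simp
    next
      case True
      then obtain m0 w0 where w0: "w0 \<in> C m0" by auto
      have Qlb: "ereal (c - f n0 z0) \<le> Q" unfolding Q_def
        using H[OF z0] by (intro INF_greatest) (auto simp: algebra_simps)
      have Qub: "Q \<le> ereal (g m0 w0)" unfolding Q_def using w0
        by (meson INF_lower UNIV_I order_trans)
      obtain q where q: "Q = ereal q" using Qlb Qub by (cases Q) auto
      have "ereal (c - q) \<le> P" unfolding P_def
      proof (intro INF_greatest)
        fix n z assume z: "z \<in> B n"
        have "ereal (c - f n z) \<le> Q" unfolding Q_def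
          using H[OF z] by (intro INF_greatest) (auto simp: algebra_simps)
        then show "ereal (c - q) \<le> ereal (f n z)" using q by simp
      qed
      then show ?thesis unfolding P_def[symmetric] Q_def[symmetric] using q by (cases P) auto
    qed
  qed
qed

lemma pth_map: "pth h (map z [0..<Suc k]) = (\<Sum>i<k. h (z i) (z (Suc i)))"
proof (induction k)
  case 0 then show ?case by simp
next
  case (Suc k)
  have "map z [0..<Suc (Suc k)] = map z [0..<Suc k] @ [z (Suc k)]" by simp
  then have "pth h (map z [0..<Suc (Suc k)]) = pth h (map z [0..<Suc k]) + h (z k) (z (Suc k))"
    by (simp add: pth_append del: upt_Suc) (simp add: last_map)
  then show ?case using Suc by simp
qed

lemma Bset_facts:
  assumes "z \<in> Bset (\<lambda>_. a) (\<lambda>_. b) n e" "a \<in> {0..1}" "b \<in> {0..1}"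
  shows "z \<in> Xsp" "\<bar>z 0 - a\<bar> < 2 * e" "\<bar>z n - b\<bar> < 2 * e"
proof -
  have aX: "(\<lambda>_. a) \<in> Xsp" "(\<lambda>_. b) \<in> Xsp" using assms unfolding Xsp_def by auto
  show zX: "z \<in> Xsp" using assms unfolding Bset_def by auto
  have "\<bar>a - z 0\<bar> \<le> 2 * dX (\<lambda>_. a) z" using dX_0[OF aX(1) zX] by simp
  then show "\<bar>z 0 - a\<bar> < 2 * e" using assms unfolding Bset_def by auto
  have "\<bar>(shift ^^ n) z 0 - b\<bar> \<le> 2 * dX ((shift ^^ n) z) (\<lambda>_. b)" using dX_0[OF shift_pow_X[OF zX] aX(2)] by simp
  then show "\<bar>z n - b\<bar> < 2 * e" using assms unfolding Bset_def by (auto simp: shift_pow)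
qed

lemma lin_aux:
  fixes pA pB a1 a2 b1 b2 E L e al hs rn rm :: real
  assumes X1: "rn * al + rm * al \<le> rn * hs + rm * hs"
  and X2: "rn * hs + rm * hs + E \<le> pA + a1 + pB + b1"
  and X3: "a1 - L * (4 * e) \<le> a2" and X4: "b1 - L * (4 * e) \<le> b2"
  and X5: "L * (4 * e) + L * (4 * e) \<le> E / 2"
  shows "E / 2 \<le> pA + a2 - rn * al + (pB + b2 - rm * al)"
  using X1 X2 X3 X4 X5 by linarith

lemma core:
  fixes h :: "real \<Rightarrow> real \<Rightarrow> real"
  defines "\<phi> \<equiv> (\<lambda>x::nat\<Rightarrow>real. h (x 0) (x 1))"
  assumes hH: "h \<in> classH" and ac: "a < c" and cb: "c < b" and a1: "a \<in> {0..1}" and b1: "b \<in> {0..1}"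
    and hsx: "\<And>x. x \<in> {0..1} \<Longrightarrow> hs \<le> h x x" and al: "alpha \<phi> \<le> hs"
    and Ep: "\<And>p s m. p \<in> {0..c} \<Longrightarrow> s \<in> {0..c} \<Longrightarrow> m \<in> {c..1} \<Longrightarrow> E \<le> h p m + h m s - h p s - hs"
    and L0: "0 \<le> L" and lip: "\<And>p q q'. p \<in> {0..1} \<Longrightarrow> q \<in> {0..1} \<Longrightarrow> q' \<in> {0..1} \<Longrightarrow>
     \<bar>h p q - h p q'\<bar> \<le> L * \<bar>q - q'\<bar>"
    and e0: "0 < e" and e1: "2 * e \<le> c - a" and e2: "2 * e \<le> b - c" and e3: "8 * L * e \<le> E / 2"
    and z: "z \<in> Bset (\<lambda>_. a) (\<lambda>_. b) n e" and w: "w \<in> Bset (\<lambda>_. b) (\<lambda>_. a) m e"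
  shows "E / 2 \<le> (\<Sum>i<n. \<phi> ((shift ^^ i) z) - alpha \<phi>) + (\<Sum>i<m. \<phi> ((shift ^^ i) w) - alpha \<phi>)"
proof -
  note zf = Bset_facts[OF z a1 b1] and wf = Bset_facts[OF w b1 a1]
  have zr: "\<And>i. z i \<in> {0..1}" using zf(1) unfolding Xsp_def by auto
  have wr: "\<And>i. w i \<in> {0..1}" using wf(1) unfolding Xsp_def by auto
  have "n \<noteq> 0"
  proof
    assume "n = 0"
    then have "\<bar>z 0 - a\<bar> < 2 * e" "\<bar>z 0 - b\<bar> < 2 * e" using zf by auto
    then show False using e1 e2 by auto
  qed
  then obtain n' where n: "n = Suc n'" by (cases n) auto
  have "m \<noteq> 0"
  proof
    assume "m = 0"
    then have "\<bar>w 0 - a\<bar> < 2 * e" "\<bar>w 0 - b\<bar> < 2 * e" using wf by auto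
    then show False using e1 e2 by auto
  qed
  then obtain m' where m: "m = Suc m'" by (cases m) auto
  define A where "A = map z [0..<n]"
  define B where "B = map w [0..<m]"
  have Ane: "A \<noteq> []" and Bne: "B \<noteq> []" unfolding A_def B_def n m by auto
  have lA: "last A = z n'" and hA: "hd A = z 0" unfolding A_def n by (simp_all add: last_map hd_map del: upt_Suc)
  have lB: "last B = w m'" and hB: "hd B = w 0" unfolding B_def m by (simp_all add: last_map hd_map del: upt_Suc)
  have pA: "pth h A = (\<Sum>i<n'. h (z i) (z (Suc i)))" unfolding A_def n by (rule pth_map)
  have pB: "pth h B = (\<Sum>i<m'. h (w i) (w (Suc i)))" unfolding B_def m by (rule pth_map)
  have cy: "cyc h (A @ B) = pth h A + h (z n') (w 0) + pth h B + h (w m') (z 0)"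
    unfolding cyc_def using Ane Bne lA hA lB hB by (simp add: pth_append)
  have set1: "set (A @ B) \<subseteq> {0..1}" unfolding A_def B_def using zr wr by auto
  have z0A: "z 0 \<in> set (A @ B)" unfolding A_def using n by (simp del: upt_Suc)
  have w0B: "w 0 \<in> set (A @ B)" unfolding B_def using m by (simp del: upt_Suc)
  have zc: "z 0 < c" using zf(2) e1 by auto
  have wc: "c \<le> w 0" using wf(2) e2 by auto
  have mon: "\<And>p s m. p \<in> {0..1} \<Longrightarrow> s \<in> {0..1} \<Longrightarrow> m \<in> {0..1} \<Longrightarrow> p \<le> m \<Longrightarrow> s \<le> m \<Longrightarrow>
      h p s + h m m \<le> h p m + h m s" by (rule classH_monge[OF hH])
  have ex1: "\<exists>x\<in>set (A @ B). x < c" using z0A zc by blast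
  have ex2: "\<exists>x\<in>set (A @ B). c \<le> x" using w0B wc by blast
  have C: "real (length (A @ B)) * hs + E \<le> cyc h (A @ B)"
    by (rule cyc_gt[OF mon hsx Ep set1 ex1 ex2])
  have len: "length (A @ B) = n + m" unfolding A_def B_def by simp
  have d1: "\<bar>h (z n') (z n) - h (z n') (w 0)\<bar> \<le> L * (4 * e)"
  proof -
    have "\<bar>z n - w 0\<bar> \<le> 4 * e" using zf(3) wf(2) by auto
    then have "L * \<bar>z n - w 0\<bar> \<le> L * (4 * e)" using L0 by (rule mult_left_mono)
    then show ?thesis using lip[OF zr zr wr, of n' n 0] by linarith
  qed
  have d2: "\<bar>h (w m') (w m) - h (w m') (z 0)\<bar> \<le> L * (4 * e)"
  proof -
    have "\<bar>w m - z 0\<bar> \<le> 4 * e" using wf(3) zf(2) by auto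
    then have "L * \<bar>w m - z 0\<bar> \<le> L * (4 * e)" using L0 by (rule mult_left_mono)
    then show ?thesis using lip[OF wr wr zr, of m' m 0] by linarith
  qed
  have sz: "(\<Sum>i<n. \<phi> ((shift ^^ i) z) - alpha \<phi>) = pth h A + h (z n') (z n) - real n * alpha \<phi>"
    unfolding pA by (simp add: sum_subtractf \<phi>_def shift_pow n)
  have sw: "(\<Sum>i<m. \<phi> ((shift ^^ i) w) - alpha \<phi>) = pth h B + h (w m') (w m) - real m * alpha \<phi>"
    unfolding pB by (simp add: sum_subtractf \<phi>_def shift_pow m)
  have "real (n + m) * alpha \<phi> \<le> real (n + m) * hs" using al by (intro mult_left_mono) auto
  then have X1: "real n * alpha \<phi> + real m * alpha \<phi> \<le> real n * hs + real m * hs"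
    by (simp add: distrib_right)
  have "length (A @ B) = n + m" unfolding A_def B_def by simp
  then have X2: "real n * hs + real m * hs + E \<le> pth h A + h (z n') (w 0) + pth h B + h (w m') (z 0)"
    using C cy by (simp add: distrib_right)
  have X3: "h (z n') (w 0) - L * (4 * e) \<le> h (z n') (z n)" using d1 by (simp add: abs_le_iff)
  have X4: "h (w m') (z 0) - L * (4 * e) \<le> h (w m') (w m)" using d2 by (simp add: abs_le_iff)
  have X5: "L * (4 * e) + L * (4 * e) \<le> E / 2" using e3 by simp
  show ?thesis unfolding sz sw by (rule lin_aux[OF X1 X2 X3 X4 X5])
qed

lemma main_lt:
  fixes h :: "real \<Rightarrow> real \<Rightarrow> real" and a b :: real
  assumes hH: "h \<in> classH"
    and am: "a \<in> mset_h h" and bm: "b \<in> mset_h h"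
    and nc: "\<not> connected_component (mset_h h) a b" and ab: "a < b"
  shows "0 < peierls (\<lambda>x. h (x 0) (x 1)) (\<lambda>_. a) (\<lambda>_. b)
       + peierls (\<lambda>x. h (x 0) (x 1)) (\<lambda>_. b) (\<lambda>_. a)"
proof -
  define \<phi> where "\<phi> = (\<lambda>x::nat\<Rightarrow>real. h (x 0) (x 1))"
  obtain L where L0: "0 \<le> L" and lip: "\<And>p q q'. p \<in> {0..1} \<Longrightarrow> q \<in> {0..1} \<Longrightarrow> q' \<in> {0..1} \<Longrightarrow>
     \<bar>h p q - h p q'\<bar> \<le> L * \<bar>q - q'\<bar>"
    and cont: "continuous_on ({0..1} \<times> {0..1}) (\<lambda>(x, y). h x y)"
    using classH_lip[OF hH] by blast
  define hs where "hs = hstar h"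
  have a1: "a \<in> {0..1}" and haa: "h a a = hs" using am unfolding mset_h_def hs_def by auto
  have b1: "b \<in> {0..1}" using bm unfolding mset_h_def by auto
  have cd: "continuous_on {0..1} (\<lambda>x. h x x)"
  proof -
    have "continuous_on {0..1::real} (\<lambda>x. (x, x))" by (intro continuous_intros)
    moreover have "(\<lambda>x::real. (x, x)) ` {0..1} \<subseteq> {0..1} \<times> {0..1}" by auto
    ultimately have "continuous_on {0..1} ((\<lambda>(x, y). h x y) \<circ> (\<lambda>x::real. (x, x)))"
      using continuous_on_compose continuous_on_subset[OF cont] by blast
    then show ?thesis by (simp add: o_def)
  qed
  have "compact ((\<lambda>x. h x x) ` {0..1})" by (intro compact_continuous_image cd compact_Icc)
  then have bb: "bdd_below ((\<lambda>x. h x x) ` {0..1})" by (intro bounded_imp_bdd_below compact_imp_bounded)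
  have hsx: "\<And>x. x \<in> {0..1} \<Longrightarrow> hs \<le> h x x"
    unfolding hs_def hstar_def using bb by (auto intro: cInf_lower)
  have al: "alpha \<phi> \<le> hs" using alpha_le[OF cont a1] haa \<phi>_def by simp
  obtain c where c: "a < c" "c < b" "c \<notin> mset_h h"
  proof -
    have "\<not> {a..b} \<subseteq> mset_h h"
    proof
      assume sub: "{a..b} \<subseteq> mset_h h"
      have "connected_component (mset_h h) a b"
        by (rule connected_componentI[OF connected_Icc sub]) (use ab in auto)
      with nc show False by simp
    qed
    then obtain c where "c \<in> {a..b}" "c \<notin> mset_h h" by blast
    moreover then have "c \<noteq> a" "c \<noteq> b" using am bm by auto
    ultimately have "a < c" "c < b" "c \<notin> mset_h h" by auto
    then show ?thesis by (rule that)
  qed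
  have c1: "c \<in> {0..1}" using c a1 b1 by auto
  have hc: "hs < h c c" using c(3) c1 hsx[OF c1] unfolding mset_h_def hs_def by auto
  obtain E where E0: "E > 0" and Ep: "\<And>p s m. p \<in> {0..c} \<Longrightarrow> s \<in> {0..c} \<Longrightarrow> m \<in> {c..1} \<Longrightarrow>
     E \<le> h p m + h m s - h p s - hs"
    using exists_E[OF hH c1 hc hsx] by blast
  define e where "e = min ((c - a) / 2) (min ((b - c) / 2) (E / (16 * (L + 1))))"
  have e0: "0 < e" unfolding e_def using c E0 L0 by auto
  have "e \<le> (c - a) / 2" "e \<le> (b - c) / 2" unfolding e_def
    by (rule min.cobounded1) (rule order_trans[OF min.cobounded2 min.cobounded1])
  then have e1: "2 * e \<le> c - a" and e2: "2 * e \<le> b - c" by simp_all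
  have e3: "8 * L * e \<le> E / 2"
  proof -
    have "e \<le> E / (16 * (L + 1))" unfolding e_def by auto
    then have "8 * L * e \<le> 8 * L * (E / (16 * (L + 1)))" using L0 by (intro mult_left_mono) auto
    also have "\<dots> = E / 2 * (L / (L + 1))" using L0 by (simp add: field_simps)
    also have "\<dots> \<le> E / 2 * 1" using L0 E0 by (intro mult_left_mono) auto
    finally show ?thesis by simp
  qed
  define f where "f = (\<lambda>n z. \<Sum>i<n. \<phi> ((shift ^^ i) z) - alpha \<phi>)"
  have key: "E / 2 \<le> f n z + f m w"
    if "z \<in> Bset (\<lambda>_. a) (\<lambda>_. b) n e" "w \<in> Bset (\<lambda>_. b) (\<lambda>_. a) m e" for n z m w
    unfolding f_def \<phi>_def
    by (rule core[OF hH c(1,2) a1 b1 hsx al[unfolded \<phi>_def] Ep L0 lip e0 e1 e2 e3 that])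
  have PQ: "ereal (E / 2) \<le> (INF n. INF z\<in>Bset (\<lambda>_. a) (\<lambda>_. b) n e. ereal (f n z))
      + (INF m. INF w\<in>Bset (\<lambda>_. b) (\<lambda>_. a) m e. ereal (f m w))"
    by (rule inf_add2) (rule key)
  have P: "(INF n. INF z\<in>Bset x y n e. ereal (f n z)) \<le> peierls \<phi> x y" for x y
  proof -
    have "(INF n. INF z\<in>Bset x y n e. ereal (f n z)) \<le> liminf (\<lambda>n. INF z\<in>Bset x y n e. ereal (f n z))"
      by (intro Liminf_bounded always_eventually allI INF_lower) simp
    also have "\<dots> \<le> peierls \<phi> x y" unfolding f_def by (rule peierls_ge[OF e0])
    finally show ?thesis .
  qed
  have "ereal (E / 2) \<le> peierls \<phi> (\<lambda>_. a) (\<lambda>_. b) + peierls \<phi> (\<lambda>_. b) (\<lambda>_. a)"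
    using PQ add_mono[OF P P] by (rule order_trans)
  moreover have "0 < ereal (E / 2)" using E0 by simp
  ultimately show ?thesis unfolding \<phi>_def by (rule less_le_trans[rotated])
qed

theorem theorem4p1:
  fixes h :: "real \<Rightarrow> real \<Rightarrow> real" and a b :: real
  assumes "h \<in> classH"
    and "a \<in> mset_h h" and "b \<in> mset_h h"
    and "\<not> connected_component (mset_h h) a b"
  shows "peierls (\<lambda>x. h (x 0) (x 1)) (\<lambda>_. a) (\<lambda>_. b)
       + peierls (\<lambda>x. h (x 0) (x 1)) (\<lambda>_. b) (\<lambda>_. a) \<noteq> 0"
proof -
  have "a \<noteq> b" using assms(2,4) connected_component_refl by metis
  then consider "a < b" | "b < a" by linarith
  then show ?thesis
  proof cases
    case 1
    then show ?thesis using main_lt[OF assms(1-4)] by auto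
  next
    case 2
    have "\<not> connected_component (mset_h h) b a" using assms(4) connected_component_sym by metis
    then show ?thesis using main_lt[OF assms(1,3,2) _ 2] by (auto simp: add.commute)
  qed
qed

end
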